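(* For distinct $a,b\in\mathbb{B}^2$, $h_{\mathbb{B}^2}(a,b)=\log H$, where $$H=\frac{\operatorname{Re}\big((1-a\overline{b})^2\big)+|a-b|^2+2\,\operatorname{Re}(1-a\overline{b})\sqrt{|a-b|^2-\big(\operatorname{Im}(a\overline{b})\big)^2}}{(1-|a|^2)(1-|b|^2)}.$$
   Context: $\mathbb{B}^2$ is the open unit disk in $\mathbb{C}$. For distinct $a,b\in\mathbb{B}^2$ the Hilbert metric is $h_{\mathbb{B}^2}(a,b)=\log\frac{|u-b||a-v|}{|u-a||b-v|}$, where $u,v$ are the two intersection points of the line $L[a,b]$ through $a,b$ with the unit circle, labelled so that $|u-a|<|u-b|$. *)

theory Defs
  imports "HOL-Analysis.Analysis"
begin

definition unit_disk :: "complex set" where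
  "unit_disk = ball 0 1"

definition cline :: "complex \<Rightarrow> complex \<Rightarrow> complex set" where
  "cline a b = {a + of_real t * (b - a) | t. True}"

definition hilbert_disk :: "complex \<Rightarrow> complex \<Rightarrow> real" where
  "hilbert_disk a b =
     (THE h. \<exists>u v. u \<in> cline a b \<and> v \<in> cline a b \<and> cmod u = 1 \<and> cmod v = 1 \<and>
        u \<noteq> v \<and> cmod (u - a) < cmod (u - b) \<and>
        h = ln ((cmod (u - b) * cmod (a - v)) / (cmod (u - a) * cmod (b - v))))"

end

theory Submission
  imports Defs
begin

lemma cmod_line_sq:
  fixes a d :: complex
  shows "(cmod (a + of_real t * d))^2 = (cmod d)^2 * t^2 + 2 * Re (a * cnj d) * t + (cmod a)^2"
  unfolding cmod_power2 by (simp add: power2_eq_square algebra_simps)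

lemma cmod_mult_real: "cmod (of_real t * d) = \<bar>t\<bar> * cmod d"
  by (simp add: norm_mult)

theorem mainTheorem5:
  fixes a b :: complex
  assumes "a \<in> unit_disk" and "b \<in> unit_disk" and "a \<noteq> b"
  shows "hilbert_disk a b =
    ln ((Re ((1 - a * cnj b)^2) + (cmod (a - b))^2
          + 2 * Re (1 - a * cnj b) * sqrt ((cmod (a - b))^2 - (Im (a * cnj b))^2))
        / ((1 - (cmod a)^2) * (1 - (cmod b)^2)))"
proof -
  define d where "d = b - a"
  define D where "D = (cmod d)^2"
  define p where "p = Re (a * cnj d)"
  define c where "c = (cmod a)^2 - 1"
  define \<Delta> where "\<Delta> = p^2 - D * c"
  define s where "s = sqrt \<Delta>"
  define t1 where "t1 = (- p - s) / D"
  define t2 where "t2 = (- p + s) / D"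
  have na: "cmod a < 1" and nb: "cmod b < 1" using assms(1,2) by (auto simp: unit_disk_def)
  have dnz: "d \<noteq> 0" using assms(3) by (simp add: d_def)
  have Dpos: "D > 0" using dnz by (simp add: D_def)
  have cneg: "c < 0" using na power_strict_mono[of "cmod a" 1 2] unfolding c_def by simp
  have nb2: "(cmod b)^2 < 1"
    using nb power_strict_mono[of "cmod b" 1 2] by simp
  have Dpos': "- D * c > 0" using Dpos cneg by (simp add: mult_pos_neg)
  have \<Delta>pos: "\<Delta> > 0" unfolding \<Delta>_def using Dpos' zero_le_power2[of p] by linarith
  have spos: "s > 0" using \<Delta>pos by (simp add: s_def)
  have s2: "s^2 = \<Delta>" using \<Delta>pos by (simp add: s_def)
  have fact: "D * t^2 + 2 * p * t + c = D * (t - t1) * (t - t2)" for t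
    unfolding t1_def t2_def using Dpos s2 unfolding \<Delta>_def
    by (simp add: field_simps power2_eq_square) (metis distrib_left)
  have f1: "D + 2 * p + c = (cmod b)^2 - 1"
  proof -
    have "(cmod (a + of_real 1 * d))^2 = D * 1^2 + 2 * p * 1 + (cmod a)^2"
      using cmod_line_sq[of a 1 d] by (simp add: D_def p_def)
    then show ?thesis by (simp add: d_def c_def)
  qed
  have t12: "t1 < t2" using spos Dpos unfolding t1_def t2_def by (simp add: divide_strict_right_mono)
  have at0: "D * (0 - t1) * (0 - t2) < 0" using fact[of 0] cneg by simp
  have at1: "D * (1 - t1) * (1 - t2) < 0" using fact[of 1] f1 nb2 by simp
  have t1neg: "t1 < 0" and t2pos: "t2 > 0"
  proof -
    have "(0 - t1) * (0 - t2) < 0" using at0 Dpos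
      by (metis mult.assoc mult_less_0_iff not_less_iff_gr_or_eq)
    then show "t1 < 0" "t2 > 0" using t12 by (auto simp: mult_less_0_iff)
  qed
  have t2gt: "t2 > 1"
  proof -
    have "(1 - t1) * (1 - t2) < 0" using at1 Dpos
      by (metis mult.assoc mult_less_0_iff not_less_iff_gr_or_eq)
    then show "t2 > 1" using t12 by (auto simp: mult_less_0_iff)
  qed
  have online: "cmod (a + of_real t * d) = 1 \<longleftrightarrow> (t = t1 \<or> t = t2)" for t
  proof -
    have "cmod (a + of_real t * d) = 1 \<longleftrightarrow> (cmod (a + of_real t * d))^2 = 1"
      by (metis norm_ge_zero power_one abs_of_nonneg real_sqrt_abs real_sqrt_one real_sqrt_unique one_power2)
    also have "\<dots> \<longleftrightarrow> D * t^2 + 2 * p * t + c = 0"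
      unfolding cmod_line_sq D_def p_def c_def by linarith
    also have "\<dots> \<longleftrightarrow> (t = t1 \<or> t = t2)" using fact Dpos by simp
    finally show ?thesis .
  qed
  define h0 where "h0 = ln ((cmod ((a + of_real t1 * d) - b) * cmod (a - (a + of_real t2 * d)))
       / (cmod ((a + of_real t1 * d) - a) * cmod (b - (a + of_real t2 * d))))"
  have bform: "b = a + of_real 1 * d" by (simp add: d_def)
  have diff: "(a + of_real x * d) - (a + of_real y * d) = of_real (x - y) * d" for x y
    by (simp add: algebra_simps)
  have dist: "cmod ((a + of_real x * d) - (a + of_real y * d)) = \<bar>x - y\<bar> * cmod d" for x y
    unfolding diff norm_mult norm_of_real by simp
  have da: "cmod ((a + of_real x * d) - a) = \<bar>x\<bar> * cmod d" for x
    by (simp add: norm_mult)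
  have ad: "cmod (a - (a + of_real x * d)) = \<bar>x\<bar> * cmod d" for x
    by (simp add: norm_mult)
  have db: "cmod ((a + of_real x * d) - b) = \<bar>x - 1\<bar> * cmod d" for x
    using dist[of x 1] bform by simp
  have bd: "cmod (b - (a + of_real x * d)) = \<bar>1 - x\<bar> * cmod d" for x
    using dist[of 1 x] bform by simp
  have THE: "hilbert_disk a b = h0"
    unfolding hilbert_disk_def
  proof (rule the_equality)
    show "\<exists>u v. u \<in> cline a b \<and> v \<in> cline a b \<and> cmod u = 1 \<and> cmod v = 1 \<and>
        u \<noteq> v \<and> cmod (u - a) < cmod (u - b) \<and>
        h0 = ln ((cmod (u - b) * cmod (a - v)) / (cmod (u - a) * cmod (b - v)))"
    proof (intro exI conjI)
      show "a + of_real t1 * d \<in> cline a b" "a + of_real t2 * d \<in> cline a b"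
        by (auto simp: cline_def d_def)
      show "cmod (a + of_real t1 * d) = 1" "cmod (a + of_real t2 * d) = 1" using online by auto
      show "a + of_real t1 * d \<noteq> a + of_real t2 * d" using t12 dnz by simp
      show "cmod (a + of_real t1 * d - a) < cmod (a + of_real t1 * d - b)"
        using da db t1neg dnz by (simp add: algebra_simps)
    qed (simp add: h0_def)
  next
    fix h assume "\<exists>u v. u \<in> cline a b \<and> v \<in> cline a b \<and> cmod u = 1 \<and> cmod v = 1 \<and>
        u \<noteq> v \<and> cmod (u - a) < cmod (u - b) \<and>
        h = ln ((cmod (u - b) * cmod (a - v)) / (cmod (u - a) * cmod (b - v)))"
    then obtain tu tv where u: "cmod (a + of_real tu * d) = 1" and v: "cmod (a + of_real tv * d) = 1"
      and ne: "a + of_real tu * d \<noteq> a + of_real tv * d"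
      and lt: "cmod ((a + of_real tu * d) - a) < cmod ((a + of_real tu * d) - b)"
      and h: "h = ln ((cmod ((a + of_real tu * d) - b) * cmod (a - (a + of_real tv * d)))
       / (cmod ((a + of_real tu * d) - a) * cmod (b - (a + of_real tv * d))))"
      unfolding cline_def d_def by blast
    have "tu \<noteq> t2"
    proof
      assume "tu = t2"
      then show False using lt da db t2gt dnz by (simp add: algebra_simps)
    qed
    then have "tu = t1" using online u by blast
    moreover have "tv = t2" using online[of tv] v ne \<open>tu = t1\<close> by auto
    ultimately show "h = h0" using h by (simp add: h0_def)
  qed
  have h0eq: "h0 = ln (((1 - t1) * t2) / ((- t1) * (t2 - 1)))"
  proof -
    have cd: "cmod d > 0" using dnz by simp
    have "((\<bar>t1 - 1\<bar> * cmod d) * (\<bar>t2\<bar> * cmod d)) / ((\<bar>t1\<bar> * cmod d) * (\<bar>1 - t2\<bar> * cmod d))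
        = ((1 - t1) * t2) / ((- t1) * (t2 - 1))"
      using t1neg t2gt cd by simp
    then show ?thesis unfolding h0_def using db ad da bd by simp
  qed
  define q where "q = Re (1 - a * cnj b)"
  have cq: "- p - c = q"
    unfolding q_def p_def c_def d_def cmod_power2 by (simp add: power2_eq_square algebra_simps)
  have prod: "t1 * t2 = c / D" unfolding t1_def t2_def using Dpos s2 unfolding \<Delta>_def
    by (simp add: field_simps power2_eq_square) (metis distrib_left)
  have num: "(1 - t1) * t2 = (q + s) / D"
  proof -
    have "(1 - t1) * t2 = t2 - c / D" using prod by (simp add: algebra_simps)
    also have "\<dots> = (- p + s - c) / D" unfolding t2_def by (simp add: diff_divide_distrib)
    also have "\<dots> = (q + s) / D" using cq by (simp add: algebra_simps)
    finally show ?thesis .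
  qed
  have den: "(- t1) * (t2 - 1) = (q - s) / D"
  proof -
    have "(- t1) * (t2 - 1) = t1 - c / D" using prod by (simp add: algebra_simps)
    also have "\<dots> = (- p - s - c) / D" unfolding t1_def by (simp add: diff_divide_distrib)
    also have "\<dots> = (q - s) / D" using cq by (simp add: algebra_simps)
    finally show ?thesis .
  qed
  have qs: "q^2 - s^2 = (1 - (cmod a)^2) * (1 - (cmod b)^2)"
  proof -
    have qd: "q = - (p + c)" using cq by simp
    have "q^2 - s^2 = (p + c)^2 - p^2 + D * c" unfolding s2 qd \<Delta>_def by (simp add: power2_eq_square algebra_simps)
    also have "\<dots> = c * (D + 2 * p + c)" by (simp add: power2_eq_square algebra_simps)
    also have "\<dots> = (1 - (cmod a)^2) * (1 - (cmod b)^2)" using f1 by (simp add: c_def algebra_simps)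
    finally show ?thesis .
  qed
  have \<Delta>eq: "\<Delta> = (cmod (a - b))^2 - (Im (a * cnj b))^2"
    unfolding \<Delta>_def p_def D_def c_def d_def cmod_power2
    by (simp add: power2_eq_square algebra_simps)
  have qs2: "q^2 + s^2 = Re ((1 - a * cnj b)^2) + (cmod (a - b))^2"
    using s2 \<Delta>eq unfolding q_def cmod_power2 by (simp add: power2_eq_square algebra_simps)
  have qsn: "q - s \<noteq> 0"
  proof -
    have "(q - s) / D > 0" using den t1neg t2gt by (metis mult_pos_pos neg_0_less_iff_less diff_gt_0_iff_gt)
    then show ?thesis by auto
  qed
  have "((1 - t1) * t2) / ((- t1) * (t2 - 1)) = (q + s) / (q - s)"
    using num den Dpos by simp
  also have "\<dots> = (q + s)^2 / (q^2 - s^2)"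
  proof -
    have "(1 - (cmod a)^2) * (1 - (cmod b)^2) > 0"
      using cneg nb2 unfolding c_def by (simp add: mult_pos_pos)
    then have "q + s \<noteq> 0" using qs by (auto simp: power2_eq_square add_eq_0_iff2)
    then show ?thesis using qsn by (simp add: power2_eq_square square_diff_square_factored)
  qed
  also have "\<dots> = (Re ((1 - a * cnj b)^2) + (cmod (a - b))^2
          + 2 * Re (1 - a * cnj b) * sqrt ((cmod (a - b))^2 - (Im (a * cnj b))^2))
        / ((1 - (cmod a)^2) * (1 - (cmod b)^2))"
  proof -
    have e1: "sqrt ((cmod (a - b))^2 - (Im (a * cnj b))^2) = s" by (simp add: s_def \<Delta>eq)
    have e2: "Re (1 - a * cnj b) = q" by (simp add: q_def)
    show ?thesis unfolding qs[symmetric] e1 e2 qs2[symmetric] by (simp add: power2_sum)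
  qed
  finally show ?thesis using THE h0eq by simp
qed

end
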